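(* Let $n\ge1$, $N=\{1,\dots,n\}$, $A=[0,1]$, and let $f:A^n\to A$ be a mechanism. Then $f$ is an order statistic mechanism if and only if $f$ is both an OWA mechanism and a generalized median voter scheme (GMVS).
   Context: A mechanism is a map $f:A^n\to A$ from profiles $x=(x_i)_{i\in N}$ of reported locations to a facility location. An OWA mechanism has weights $w_1,\dots,w_n\in[0,1]$ with $\sum_j w_j=1$ and returns $f(x)=\sum_{j=1}^n w_j x_{\pi(j)}$, where $\pi$ is a permutation of $N$ with $x_{\pi(1)}\le\dots\le x_{\pi(n)}$. An order statistic mechanism is one for which there is a fixed $j\in\{1,\dots,n\}$ with $f(x)=x_{\pi(j)}$ (the $j$-th smallest report) for all $x$, i.e., an OWA with $w_j=1$. $f$ is a GMVS if there are parameters $\alpha_S\in A$, one for each nonempty $S\subseteq N$, such that for all $x\in A^n$, $f(x)=\min_{\emptyset\ne S\subseteq N}\max\big(\{x_i: i\in S\}\cup\{\alpha_S\}\big)$. *)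

theory Defs
  imports Complex_Main
begin

text \<open>Agents are N = {0..<n} (0-indexed). A profile is x :: nat => real; only the
values x i for i < n matter. The domain A^n with A = [0,1] is the set of profiles
with x i in [0,1] for all i < n.\<close>

definition profiles :: "nat \<Rightarrow> (nat \<Rightarrow> real) set" where
  "profiles n = {x. \<forall>i<n. x i \<in> {0..1}}"

definition mechanism :: "nat \<Rightarrow> ((nat \<Rightarrow> real) \<Rightarrow> real) \<Rightarrow> bool" where
  "mechanism n f \<longleftrightarrow> (\<forall>x\<in>profiles n. f x \<in> {0..1})"

text \<open>The (j+1)-th smallest report, j < n, i.e. x_{pi(j+1)} in the paper's 1-indexed notation.\<close>
definition kth_smallest :: "nat \<Rightarrow> (nat \<Rightarrow> real) \<Rightarrow> nat \<Rightarrow> real" where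
  "kth_smallest n x j = sort (map x [0..<n]) ! j"

definition owa_mechanism :: "nat \<Rightarrow> ((nat \<Rightarrow> real) \<Rightarrow> real) \<Rightarrow> bool" where
  "owa_mechanism n f \<longleftrightarrow>
     (\<exists>w :: nat \<Rightarrow> real. (\<forall>j<n. w j \<in> {0..1}) \<and> (\<Sum>j<n. w j) = 1 \<and>
        (\<forall>x\<in>profiles n. f x = (\<Sum>j<n. w j * kth_smallest n x j)))"

definition order_statistic_mechanism :: "nat \<Rightarrow> ((nat \<Rightarrow> real) \<Rightarrow> real) \<Rightarrow> bool" where
  "order_statistic_mechanism n f \<longleftrightarrow>
     (\<exists>j<n. \<forall>x\<in>profiles n. f x = kth_smallest n x j)"

definition gmvs :: "nat \<Rightarrow> ((nat \<Rightarrow> real) \<Rightarrow> real) \<Rightarrow> bool" where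
  "gmvs n f \<longleftrightarrow>
     (\<exists>\<alpha> :: nat set \<Rightarrow> real.
        (\<forall>S. S \<subseteq> {..<n} \<and> S \<noteq> {} \<longrightarrow> \<alpha> S \<in> {0..1}) \<and>
        (\<forall>x\<in>profiles n.
           f x = Min ((\<lambda>S. max (Max (x ` S)) (\<alpha> S)) ` {S. S \<subseteq> {..<n} \<and> S \<noteq> {}})))"

end

theory Submission
  imports Defs "HOL-Library.Multiset"
begin

lemma card_filter_sort:
  "card {i. i < n \<and> P (x i)} = length (filter P (sort (map x [0..<n])))"
proof -
  have "length (filter P (sort (map x [0..<n]))) = length (filter P (map x [0..<n]))"
    by (simp add: filter_sort)
  also have "\<dots> = card {i. i < n \<and> P (map x [0..<n] ! i)}"
    by (simp add: length_filter_conv_card)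
  also have "{i. i < n \<and> P (map x [0..<n] ! i)} = {i. i < n \<and> P (x i)}" by auto
  finally show ?thesis by simp
qed

lemma kth_in:
  assumes "x \<in> profiles n" "j < n"
  shows "kth_smallest n x j \<in> {0..1}"
proof -
  have "kth_smallest n x j \<in> set (sort (map x [0..<n]))"
    unfolding kth_smallest_def by (rule nth_mem) (use assms(2) in simp)
  then have "kth_smallest n x j \<in> x ` {..<n}" by auto
  then show ?thesis using assms(1) by (auto simp: profiles_def)
qed

lemma count_less:
  assumes "j < n"
  shows "card {i. i < n \<and> x i < kth_smallest n x j} \<le> j"
proof -
  let ?s = "sort (map x [0..<n])"
  let ?P = "\<lambda>v. v < kth_smallest n x j"
  have len: "length ?s = n" by simp
  have "filter ?P (drop j ?s) = []"
  proof -
    have "\<forall>v\<in>set (drop j ?s). \<not> ?P v"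
    proof
      fix v assume "v \<in> set (drop j ?s)"
      then obtain m where m: "m < length (drop j ?s)" "v = drop j ?s ! m"
        by (metis in_set_conv_nth)
      then have "v = ?s ! (j + m)" using assms by simp
      moreover have "?s ! j \<le> ?s ! (j + m)"
        using m by (intro sorted_nth_mono) auto
      ultimately show "\<not> ?P v" unfolding kth_smallest_def by simp
    qed
    then show ?thesis by (simp add: filter_empty_conv)
  qed
  then have "length (filter ?P ?s) = length (filter ?P (take j ?s))"
    by (metis append_Nil2 append_take_drop_id filter_append)
  also have "\<dots> \<le> j" by (metis length_filter_le length_take min.bounded_iff nle_le)
  finally show ?thesis using card_filter_sort[of n ?P x] by simp
qed

lemma count_le:
  assumes "j < n"
  shows "card {i. i < n \<and> x i \<le> kth_smallest n x j} \<ge> Suc j"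
proof -
  let ?s = "sort (map x [0..<n])"
  let ?P = "\<lambda>v. v \<le> kth_smallest n x j"
  have "filter ?P (take (Suc j) ?s) = take (Suc j) ?s"
  proof -
    have "\<forall>v\<in>set (take (Suc j) ?s). ?P v"
    proof
      fix v assume "v \<in> set (take (Suc j) ?s)"
      then obtain m where m: "m < length (take (Suc j) ?s)" "v = take (Suc j) ?s ! m"
        by (metis in_set_conv_nth)
      then have "v = ?s ! m" "m \<le> j" using assms by auto
      moreover have "?s ! m \<le> ?s ! j"
        using m assms by (intro sorted_nth_mono) auto
      ultimately show "?P v" unfolding kth_smallest_def by simp
    qed
    then show ?thesis by simp
  qed
  then have "length (filter ?P ?s) \<ge> length (take (Suc j) ?s)"
    by (metis append_take_drop_id filter_append length_append le_add1)
  then have "length (filter ?P ?s) \<ge> Suc j" using assms by simp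
  then show ?thesis using card_filter_sort[of n ?P x] by simp
qed

lemma os_gmvs:
  assumes "j < n"
  shows "gmvs n (\<lambda>x. kth_smallest n x j)"
proof -
  define \<alpha> where "\<alpha> S = (if card S \<ge> Suc j then 0 else (1::real))" for S :: "nat set"
  let ?F = "{S. S \<subseteq> {..<n} \<and> S \<noteq> {}}"
  have fin: "finite ?F" by (rule finite_subset[of _ "Pow {..<n}"]) auto
  have "kth_smallest n x j = Min ((\<lambda>S. max (Max (x ` S)) (\<alpha> S)) ` ?F)"
    if x: "x \<in> profiles n" for x
  proof -
    let ?k = "kth_smallest n x j"
    have k01: "?k \<in> {0..1}" using kth_in[OF x assms] .
    have lb: "?k \<le> max (Max (x ` S)) (\<alpha> S)" if S: "S \<in> ?F" for S
    proof (cases "card S \<ge> Suc j")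
      case True
      have finS: "finite S" using S finite_subset by auto
      have "\<not> S \<subseteq> {i. i < n \<and> x i < ?k}"
      proof
        assume "S \<subseteq> {i. i < n \<and> x i < ?k}"
        then have "card S \<le> card {i. i < n \<and> x i < ?k}" by (intro card_mono) auto
        with count_less[OF assms, of x] True show False by simp
      qed
      then obtain i where i: "i \<in> S" "\<not> x i < ?k" using S by auto
      then have "x i \<le> Max (x ` S)" using finS by simp
      then show ?thesis using i by simp
    next
      case False
      then show ?thesis using k01 by (simp add: \<alpha>_def le_max_iff_disj)
    qed
    define T where "T = {i. i < n \<and> x i \<le> ?k}"
    have cT: "card T \<ge> Suc j" unfolding T_def using count_le[OF assms] .
    have finT: "finite T" unfolding T_def by simp
    have "T \<noteq> {}" using cT by auto
    then have TF: "T \<in> ?F" by (auto simp: T_def)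
    have "Max (x ` T) \<le> ?k" using finT TF by (auto simp: T_def)
    then have ub: "max (Max (x ` T)) (\<alpha> T) \<le> ?k" using cT k01 by (simp add: \<alpha>_def)
    show ?thesis
    proof (rule antisym)
      show "?k \<le> Min ((\<lambda>S. max (Max (x ` S)) (\<alpha> S)) ` ?F)"
        using fin TF lb by (subst Min_ge_iff) auto
      show "Min ((\<lambda>S. max (Max (x ` S)) (\<alpha> S)) ` ?F) \<le> ?k"
        using fin TF ub by (intro Min.coboundedI[THEN order_trans]) auto
    qed
  qed
  moreover have "\<forall>S. S \<subseteq> {..<n} \<and> S \<noteq> {} \<longrightarrow> \<alpha> S \<in> {0..1}" by (simp add: \<alpha>_def)
  ultimately show ?thesis unfolding gmvs_def by blast
qed

lemma os_owa:
  assumes "j < n"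
  shows "owa_mechanism n (\<lambda>x. kth_smallest n x j)"
  unfolding owa_mechanism_def
proof (rule exI[of _ "\<lambda>i. if i = j then 1 else 0"], intro conjI ballI)
  fix x
  have "(\<Sum>ja<n. (if ja = j then 1 else 0) * kth_smallest n x ja)
     = (\<Sum>ja<n. if ja = j then kth_smallest n x ja else 0)" by (rule sum.cong) auto
  then show "kth_smallest n x j = (\<Sum>ja<n. (if ja = j then 1 else 0) * kth_smallest n x ja)"
    using assms by simp
qed (use assms in auto)

lemma gmvs_range:
  assumes "gmvs n f" "n \<ge> 1"
  obtains F where "finite F" "\<And>x. x \<in> profiles n \<Longrightarrow> f x \<in> x ` {..<n} \<union> F"
proof -
  obtain \<alpha> where a: "\<forall>x\<in>profiles n.
           f x = Min ((\<lambda>S. max (Max (x ` S)) (\<alpha> S)) ` {S. S \<subseteq> {..<n} \<and> S \<noteq> {}})"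
    using assms unfolding gmvs_def by blast
  let ?F = "{S. S \<subseteq> {..<n} \<and> S \<noteq> {}}"
  have fin: "finite ?F" by (rule finite_subset[of _ "Pow {..<n}"]) auto
  have "f x \<in> x ` {..<n} \<union> \<alpha> ` Pow {..<n}" if x: "x \<in> profiles n" for x
  proof -
    have "{0} \<in> ?F" using assms(2) by auto
    then have ne: "?F \<noteq> {}" by blast
    have "f x \<in> (\<lambda>S. max (Max (x ` S)) (\<alpha> S)) ` ?F"
      using a x fin ne by (simp del: Min_in) (rule Min_in; auto)
    then obtain S where S: "S \<in> ?F" "f x = max (Max (x ` S)) (\<alpha> S)" by blast
    have finS: "finite S" using S(1) finite_subset by auto
    have "Max (x ` S) \<in> x ` S" using finS S(1) by (intro Max_in) auto
    then show ?thesis using S by (auto simp: max_def)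
  qed
  then show ?thesis using that[of "\<alpha> ` Pow {..<n}"] by auto
qed

definition prof :: "nat \<Rightarrow> real \<Rightarrow> nat \<Rightarrow> real" where
  "prof k t = (\<lambda>i. if i < k then t else 0)"

lemma prof_in: "t \<in> {0..1} \<Longrightarrow> prof k t \<in> profiles n"
  by (auto simp: prof_def profiles_def)

lemma kth_prof:
  assumes "k \<le> n" "j < n" "0 \<le> t"
  shows "kth_smallest n (prof k t) j = (if j < n - k then 0 else t)"
proof -
  have m: "map (prof k t) [0..<n] = replicate k t @ replicate (n - k) 0"
    using assms(1) by (intro nth_equalityI) (auto simp: prof_def nth_append)
  have "sort (map (prof k t) [0..<n]) = replicate (n - k) 0 @ replicate k t"
  proof (rule properties_for_sort)
    show "mset (replicate (n - k) 0 @ replicate k t) = mset (map (prof k t) [0..<n])"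
      unfolding m by (simp add: add.commute)
    show "sorted (replicate (n - k) 0 @ replicate k t)"
      using assms(3) by (auto simp: sorted_append)
  qed
  then show ?thesis unfolding kth_smallest_def using assms by (auto simp: nth_append)
qed


lemma owa_gmvs_os:
  assumes n: "n \<ge> 1" and owa: "owa_mechanism n f" and g: "gmvs n f"
  shows "order_statistic_mechanism n f"
proof -
  obtain w where w01: "\<forall>j<n. w j \<in> {0..1}" and wsum: "(\<Sum>j<n. w j) = 1"
    and fw: "\<forall>x\<in>profiles n. f x = (\<Sum>j<n. w j * kth_smallest n x j)"
    using owa unfolding owa_mechanism_def by blast
  obtain F where finF: "finite F" and fF: "\<And>x. x \<in> profiles n \<Longrightarrow> f x \<in> x ` {..<n} \<union> F"
    using gmvs_range[OF g n] by blast
  define W where "W k = (\<Sum>j\<in>{n-k..<n}. w j)" for k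
  have fprof: "f (prof k t) = t * W k" if "k \<le> n" "t \<in> {0..1}" for k t
  proof -
    have "f (prof k t) = (\<Sum>j<n. w j * (if j < n - k then 0 else t))"
      using fw prof_in[OF that(2)] kth_prof[OF that(1) _] that(2) by simp
    also have "\<dots> = (\<Sum>j\<in>{..<n}. if n - k \<le> j then t * w j else 0)"
      by (rule sum.cong) auto
    also have "\<dots> = (\<Sum>j\<in>{j\<in>{..<n}. n - k \<le> j}. t * w j)"
      by (rule sum.inter_filter[symmetric]) simp
    also have "{j\<in>{..<n}. n - k \<le> j} = {n-k..<n}" by auto
    finally show ?thesis by (simp add: W_def sum_distrib_left)
  qed
  have W01: "W k = 0 \<or> W k = 1" if k: "k \<le> n" for k
  proof (rule ccontr)
    assume c: "\<not> (W k = 0 \<or> W k = 1)"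
    have "W k \<ge> 0" unfolding W_def using w01 by (intro sum_nonneg) auto
    moreover have "W k \<le> (\<Sum>j<n. w j)" unfolding W_def
      using w01 by (intro sum_mono2) auto
    ultimately have c0: "0 < W k" "W k < 1" using c wsum by auto
    let ?G = "(\<lambda>y. y / W k) ` F"
    have "finite ?G" using finF by simp
    then have "\<not> {0<..(1::real)} \<subseteq> ?G" using infinite_super by (metis infinite_Ioc_iff zero_less_one)
    then obtain t where t: "0 < t" "t \<le> 1" "t \<notin> ?G" by (auto simp: subset_iff)
    have "f (prof k t) \<in> prof k t ` {..<n} \<union> F" using fF prof_in t by auto
    moreover have "f (prof k t) = t * W k" using fprof k t by auto
    moreover have "prof k t ` {..<n} \<subseteq> {0, t}" by (auto simp: prof_def)
    moreover have "t * W k \<noteq> 0" "t * W k \<noteq> t" using t c0 by auto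
    ultimately have "t * W k \<in> F" by auto
    then have "(t * W k) / W k \<in> ?G" by blast
    then show False using t c0 by simp
  qed
  have wj: "w j = 0 \<or> w j = 1" if j: "j < n" for j
  proof -
    have e: "n - (n - j) = j" "n - (n - Suc j) = Suc j" using j by auto
    have "{j..<n} = insert j {Suc j..<n}" using j by auto
    then have "W (n - j) = w j + W (n - Suc j)" unfolding W_def e by simp
    then show ?thesis using W01[of "n - j"] W01[of "n - Suc j"] w01 j by auto
  qed
  obtain j where j: "j < n" "w j = 1"
  proof (rule ccontr)
    assume "\<not> thesis"
    then have "\<forall>j<n. w j = 0" using that wj by blast
    then have "(\<Sum>j<n. w j) = 0" by simp
    then show False using wsum by simp
  qed
  have others: "w i = 0" if i: "i < n" "i \<noteq> j" for i
  proof (rule ccontr)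
    assume "w i \<noteq> 0"
    then have wi: "w i = 1" using wj i by blast
    have "(\<Sum>l\<in>{i, j}. w l) \<le> (\<Sum>l<n. w l)"
      using w01 i j by (intro sum_mono2) auto
    then show False using wi j i wsum by simp
  qed
  have "f x = kth_smallest n x j" if x: "x \<in> profiles n" for x
  proof -
    have "f x = (\<Sum>l<n. w l * kth_smallest n x l)" using fw x by simp
    also have "\<dots> = (\<Sum>l<n. if l = j then kth_smallest n x l else 0)"
      using others j by (intro sum.cong) auto
    also have "\<dots> = kth_smallest n x j" using j by simp
    finally show ?thesis .
  qed
  then show ?thesis unfolding order_statistic_mechanism_def using j by blast
qed

theorem corollary1:
  fixes n :: nat and f :: "(nat \<Rightarrow> real) \<Rightarrow> real"
  assumes "n \<ge> 1" and "mechanism n f"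
  shows "order_statistic_mechanism n f \<longleftrightarrow> owa_mechanism n f \<and> gmvs n f"
proof
  assume "order_statistic_mechanism n f"
  then obtain j where j: "j < n" and fx: "\<forall>x\<in>profiles n. f x = kth_smallest n x j"
    unfolding order_statistic_mechanism_def by blast
  have "owa_mechanism n f \<longleftrightarrow> owa_mechanism n (\<lambda>x. kth_smallest n x j)"
    unfolding owa_mechanism_def using fx by auto
  moreover have "gmvs n f \<longleftrightarrow> gmvs n (\<lambda>x. kth_smallest n x j)"
    unfolding gmvs_def using fx by auto
  ultimately show "owa_mechanism n f \<and> gmvs n f" using os_owa[OF j] os_gmvs[OF j] by simp
next
  assume "owa_mechanism n f \<and> gmvs n f"
  then show "order_statistic_mechanism n f" using owa_gmvs_os assms(1) by blast
qed

end
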